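(* There is $c>0$ independent of $h$ such that for all $u\in C^0(\bar I)$ and $v\in C^0(\bar I)^d$ with $|v(z)|=1$ for all $z\in\mathcal N_2(\mathcal T_h)$, $$\|\mathcal I_{h,2}(uv)\|_{L^1(I)^d}\le c\|\mathcal I_{h,2}u\|_{L^1(I)}.$$
   Context: Mesh notation: $I=(a,b)\subset\mathbb R$, $a=x_0<x_1<\dots<x_M=b$, $I_i=[x_{i-1},x_i]$, $h_i=x_i-x_{i-1}$, $h=\max_i h_i$, $\mathcal T_h=\{I_1,\dots,I_M\}$. Let $m_i=(x_{i-1}+x_i)/2$, $\mathcal N_1(\mathcal T_h)=\{x_0,\dots,x_M\}$, $\mathcal N_2(\mathcal T_h)=\mathcal N_1(\mathcal T_h)\cup\{m_1,\dots,m_M\}$. $\mathcal I_{h,2}$ is the continuous piecewise quadratic nodal interpolant defined by $\mathcal I_{h,2}v(z)=v(z)$ for $z\in\mathcal N_2(\mathcal T_h)$ (componentwise for vector-valued functions). *)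

theory Defs
  imports "HOL-Analysis.Analysis"
begin

definition is_mesh :: "real \<Rightarrow> real \<Rightarrow> nat \<Rightarrow> (nat \<Rightarrow> real) \<Rightarrow> bool" where
  "is_mesh a b M x \<longleftrightarrow> 1 \<le> M \<and> x 0 = a \<and> x M = b \<and> (\<forall>i<M. x i < x (Suc i))"

definition midpt :: "(nat \<Rightarrow> real) \<Rightarrow> nat \<Rightarrow> real" where
  "midpt x i = (x (i - 1) + x i) / 2"

definition nodes2 :: "nat \<Rightarrow> (nat \<Rightarrow> real) \<Rightarrow> real set" where
  "nodes2 M x = {x i | i. i \<le> M} \<union> {midpt x i | i. 1 \<le> i \<and> i \<le> M}"

definition quad_lagr :: "real \<Rightarrow> real \<Rightarrow> real \<Rightarrow> 'a::real_vector \<Rightarrow> 'a \<Rightarrow> 'a \<Rightarrow> real \<Rightarrow> 'a" where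
  "quad_lagr p m q fp fm fq t =
     (((t - m) * (t - q)) / ((p - m) * (p - q))) *\<^sub>R fp
   + (((t - p) * (t - q)) / ((m - p) * (m - q))) *\<^sub>R fm
   + (((t - p) * (t - m)) / ((q - p) * (q - m))) *\<^sub>R fq"

text \<open>Continuous piecewise quadratic nodal interpolant I_{h,2} (componentwise for
  vector-valued f, via scaleR); defined as 0 outside [x 0, x M].  On an element the
  quadratic of the element is used (at interior vertices both adjacent quadratics agree).\<close>
definition interp2 :: "nat \<Rightarrow> (nat \<Rightarrow> real) \<Rightarrow> (real \<Rightarrow> 'a::real_vector) \<Rightarrow> real \<Rightarrow> 'a" where
  "interp2 M x f t =
    (if \<exists>i. 1 \<le> i \<and> i \<le> M \<and> x (i - 1) \<le> t \<and> t \<le> x i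
     then (let i = (LEAST i. 1 \<le> i \<and> i \<le> M \<and> x (i - 1) \<le> t \<and> t \<le> x i)
           in quad_lagr (x (i - 1)) (midpt x i) (x i) (f (x (i - 1))) (f (midpt x i)) (f (x i)) t)
     else 0)"

end

theory Submission
  imports Defs
begin

lemma quad_form:
  fixes p0 pm p1 :: real
  assumes "al < be" "m = (al+be)/2" "d = (be-al)/2"
  shows "quad_lagr al m be p0 pm p1 t =
     pm + ((p1-p0)/(2*d))*(t-m) + ((p0+p1-2*pm)/(2*d^2))*(t-m)^2"
proof -
  have d: "d > 0" using assms by simp
  have b: "be = al + 2*d" "m = al + d" using assms by simp_all
  show ?thesis unfolding quad_lagr_def b using d
    by (simp add: field_simps power2_eq_square)
qed

lemma ftc_poly:
  fixes ka kb kc kd ke :: real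
  assumes "al \<le> be"
  shows "((\<lambda>t. ka + kb*(t-m) + kc*(t-m)^2 + kd*(t-m)^3 + ke*(t-m)^4) has_integral
     ((ka*(be-m) + kb*(be-m)^2/2 + kc*(be-m)^3/3 + kd*(be-m)^4/4 + ke*(be-m)^5/5)
     - (ka*(al-m) + kb*(al-m)^2/2 + kc*(al-m)^3/3 + kd*(al-m)^4/4 + ke*(al-m)^5/5))) {al..be}"
proof (rule fundamental_theorem_of_calculus[OF assms])
  fix t assume "t \<in> {al..be}"
  have "((\<lambda>t. ka*(t-m) + kb*(t-m)^2/2 + kc*(t-m)^3/3 + kd*(t-m)^4/4 + ke*(t-m)^5/5) has_real_derivative
     (ka + kb*(t-m) + kc*(t-m)^2 + kd*(t-m)^3 + ke*(t-m)^4)) (at t within {al..be})"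
    by (auto intro!: derivative_eq_intros simp: field_simps power2_eq_square power3_eq_cube numeral_eq_Suc)
  then show "((\<lambda>t. ka*(t-m) + kb*(t-m)^2/2 + kc*(t-m)^3/3 + kd*(t-m)^4/4 + ke*(t-m)^5/5) has_vector_derivative
     (ka + kb*(t-m) + kc*(t-m)^2 + kd*(t-m)^3 + ke*(t-m)^4)) (at t within {al..be})"
    by (simp add: has_real_derivative_iff_has_vector_derivative)
qed

lemma ftc_poly_sym:
  fixes ka kb kc kd ke :: real
  assumes "al \<le> be" "be - m = d" "al - m = -d"
  shows "((\<lambda>t. ka + kb*(t-m) + kc*(t-m)^2 + kd*(t-m)^3 + ke*(t-m)^4) has_integral
     (2*ka*d + 2*kc*d^3/3 + 2*ke*d^5/5)) {al..be}"
proof -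
  have "(ka*(be-m) + kb*(be-m)^2/2 + kc*(be-m)^3/3 + kd*(be-m)^4/4 + ke*(be-m)^5/5)
     - (ka*(al-m) + kb*(al-m)^2/2 + kc*(al-m)^3/3 + kd*(al-m)^4/4 + ke*(al-m)^5/5)
     = 2*ka*d + 2*kc*d^3/3 + 2*ke*d^5/5"
    unfolding assms(2,3) by (simp add: field_simps)
  then show ?thesis using ftc_poly[OF assms(1), of ka kb m kc kd ke] by metis
qed

lemma key_arith:
  fixes d c0 c1 c2 J :: real
  assumes "d > 0"
    "\<bar>2*d*c0 + 2/3*d^3*c2\<bar> \<le> J"
    "\<bar>2/3*d^2*c1\<bar> \<le> J"
    "\<bar>2/3*d*c0 + 2/5*d^3*c2\<bar> \<le> J"
  shows "2*d*(\<bar>c0 - c1*d + c2*d^2\<bar> + \<bar>c0\<bar> + \<bar>c0 + c1*d + c2*d^2\<bar>) \<le> 54*J"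
proof -
  define X where "X = d*c0"
  define Y where "Y = d^3*c2"
  define Z where "Z = d^2*c1"
  have e: "\<bar>2*X + 2/3*Y\<bar> \<le> J" "\<bar>2/3*Z\<bar> \<le> J" "\<bar>2/3*X + 2/5*Y\<bar> \<le> J"
    using assms by (simp_all add: X_def Y_def Z_def)
  have "2*d*(\<bar>c0 - c1*d + c2*d^2\<bar> + \<bar>c0\<bar> + \<bar>c0 + c1*d + c2*d^2\<bar>)
     = 2*(\<bar>X - Z + Y\<bar> + \<bar>X\<bar> + \<bar>X + Z + Y\<bar>)"
  proof -
    have "d*\<bar>c0 - c1*d + c2*d^2\<bar> = \<bar>X - Z + Y\<bar>" "d*\<bar>c0\<bar> = \<bar>X\<bar>"
      "d*\<bar>c0 + c1*d + c2*d^2\<bar> = \<bar>X + Z + Y\<bar>"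
    proof -
      have "X - Z + Y = d*(c0 - c1*d + c2*d^2)" "X = d*c0" "X + Z + Y = d*(c0 + c1*d + c2*d^2)"
        by (simp_all add: X_def Y_def Z_def algebra_simps power2_eq_square power3_eq_cube)
      then show "d*\<bar>c0 - c1*d + c2*d^2\<bar> = \<bar>X - Z + Y\<bar>" "d*\<bar>c0\<bar> = \<bar>X\<bar>"
        "d*\<bar>c0 + c1*d + c2*d^2\<bar> = \<bar>X + Z + Y\<bar>"
        using assms(1) by (simp_all add: abs_mult)
    qed
    then show ?thesis by (simp add: algebra_simps)
  qed
  also have "\<dots> \<le> 54*J"
  proof -
    have e': "2*X + 2/3*Y \<le> J" "-(2*X + 2/3*Y) \<le> J" "2/3*Z \<le> J" "-(2/3*Z) \<le> J"
      "2/3*X + 2/5*Y \<le> J" "-(2/3*X + 2/5*Y) \<le> J" using e unfolding abs_le_iff by auto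
    have b: "\<bar>X\<bar> \<le> 3*J" "\<bar>Y\<bar> \<le> 15/2*J" "\<bar>Z\<bar> \<le> 3/2*J"
      unfolding abs_le_iff using e' by linarith+
    have "\<bar>X - Z + Y\<bar> \<le> \<bar>X\<bar> + \<bar>Z\<bar> + \<bar>Y\<bar>" "\<bar>X + Z + Y\<bar> \<le> \<bar>X\<bar> + \<bar>Z\<bar> + \<bar>Y\<bar>"
      by (simp_all add: abs_le_iff) linarith+
    then show ?thesis using b unfolding distrib_left by linarith
  qed
  finally show ?thesis .
qed

lemma int_abs_bound:
  fixes g q :: "real \<Rightarrow> real"
  assumes "(g has_integral e) {al..be}" "((\<lambda>t. \<bar>q t\<bar>) has_integral J) {al..be}"
    "\<And>t. t \<in> {al..be} \<Longrightarrow> \<bar>g t\<bar> \<le> \<bar>q t\<bar>"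
  shows "\<bar>e\<bar> \<le> J"
proof -
  have "e \<le> J" by (rule has_integral_le[OF assms(1,2)]) (use assms(3) in fastforce)
  moreover have "-e \<le> J" by (rule has_integral_le[OF has_integral_neg[OF assms(1)] assms(2)]) (use assms(3) in fastforce)
  ultimately show ?thesis by linarith
qed

lemma phi_bounds:
  fixes s d :: real
  assumes "d > 0" "abs (s) \<le> d"
  shows "abs (s * (s-d)) \<le> 2*d^2" "abs ((s+d)*(s-d)) \<le> d^2" "abs ((s+d) * s) \<le> 2*d^2"
proof -
  have s: "-d \<le> s" "s \<le> d" using assms by auto
  have "0 \<le> (2*d - s)*(s+d)" using s by (intro mult_nonneg_nonneg) auto
  moreover have "0 \<le> (s - d/2)^2" by simp
  ultimately show "abs (s * (s-d)) \<le> 2*d^2" unfolding abs_le_iff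
    by (simp add: algebra_simps power2_eq_square)
next
  have s: "-d \<le> s" "s \<le> d" using assms by auto
  have "0 \<le> (d - s)*(s+d)" using s by (intro mult_nonneg_nonneg) auto
  moreover have "0 \<le> s^2" by simp
  ultimately show "abs ((s+d)*(s-d)) \<le> d^2" unfolding abs_le_iff
    using mult_pos_pos[OF assms(1) assms(1)] by (simp add: algebra_simps power2_eq_square)
next
  have s: "-d \<le> s" "s \<le> d" using assms by auto
  have "0 \<le> (2*d + s)*(d-s)" using s by (intro mult_nonneg_nonneg) auto
  moreover have "0 \<le> (s + d/2)^2" by simp
  ultimately show "abs ((s+d) * s) \<le> 2*d^2" unfolding abs_le_iff
    by (simp add: algebra_simps power2_eq_square)
qed


lemma elem_lower:
  fixes p0 pm p1 :: real
  assumes "al < be"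
  shows "(be-al)*(\<bar>p0\<bar>+\<bar>pm\<bar>+\<bar>p1\<bar>) \<le> 54 * integral {al..be} (\<lambda>t. \<bar>quad_lagr al ((al+be)/2) be p0 pm p1 t\<bar>)"
proof -
  define m where "m = (al+be)/2"
  define d where "d = (be-al)/2"
  define c0 where "c0 = pm"
  define c1 where "c1 = (p1-p0)/(2*d)"
  define c2 where "c2 = (p0+p1-2*pm)/(2*d^2)"
  have d: "d > 0" using assms by (simp add: d_def)
  have bm: "be - m = d" "al - m = -d" by (simp_all add: m_def d_def field_simps)
  have qf: "\<And>t. quad_lagr al m be p0 pm p1 t = c0 + c1*(t-m) + c2*(t-m)^2"
    unfolding c0_def c1_def c2_def by (rule quad_form[OF assms m_def d_def])
  define J where "J = integral {al..be} (\<lambda>t. \<bar>quad_lagr al m be p0 pm p1 t\<bar>)"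
  have "continuous_on {al..be} (\<lambda>t. \<bar>quad_lagr al m be p0 pm p1 t\<bar>)"
    unfolding qf by (intro continuous_intros)
  then have hJ: "((\<lambda>t. \<bar>quad_lagr al m be p0 pm p1 t\<bar>) has_integral J) {al..be}"
    unfolding J_def by (intro integrable_integral integrable_continuous_interval)
  have w: "\<bar>t - m\<bar> \<le> d" if "t \<in> {al..be}" for t
    using that by (auto simp: m_def d_def abs_le_iff field_simps)
  have e1: "\<bar>2*d*c0 + 2/3*d^3*c2\<bar> \<le> J"
  proof -
    have "((\<lambda>t. c0 + c1*(t-m) + c2*(t-m)^2 + 0*(t-m)^3 + 0*(t-m)^4) has_integral (2*d*c0 + 2/3*d^3*c2)) {al..be}"
      using ftc_poly[where al=al and be=be and ka=c0 and kb=c1 and kc=c2 and kd=0 and ke=0 and m=m] assms unfolding bm by (simp add: power2_eq_square power3_eq_cube algebra_simps)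
    then show ?thesis unfolding J_def
      by (rule int_abs_bound[OF _ hJ[unfolded J_def]]) (simp add: qf)
  qed
  have e2: "\<bar>2/3*d^2*c1\<bar> \<le> J"
  proof -
    have "((\<lambda>t. 0 + c0/d*(t-m) + c1/d*(t-m)^2 + c2/d*(t-m)^3 + 0*(t-m)^4) has_integral (2*0*d + 2*(c1/d)*d^3/3 + 2*0*d^5/5)) {al..be}"
      by (rule ftc_poly_sym) (use assms bm in auto)
    moreover have "2*0*d + 2*(c1/d)*d^3/3 + 2*0*d^5/5 = 2/3*d^2*c1"
      using d by (simp add: field_simps power2_eq_square power3_eq_cube)
    ultimately have "((\<lambda>t. 0 + c0/d*(t-m) + c1/d*(t-m)^2 + c2/d*(t-m)^3 + 0*(t-m)^4) has_integral (2/3*d^2*c1)) {al..be}"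
      by metis
    then show ?thesis unfolding J_def
    proof (rule int_abs_bound[OF _ hJ[unfolded J_def]])
      fix t assume t: "t \<in> {al..be}"
      have "0 + c0/d*(t-m) + c1/d*(t-m)^2 + c2/d*(t-m)^3 + 0*(t-m)^4 = quad_lagr al m be p0 pm p1 t * ((t-m)/d)"
        unfolding qf using d by (simp add: field_simps power2_eq_square power3_eq_cube)
      moreover have "\<bar>(t-m)/d\<bar> \<le> 1" using w[OF t] d by simp
      ultimately show "\<bar>0 + c0/d*(t-m) + c1/d*(t-m)^2 + c2/d*(t-m)^3 + 0*(t-m)^4\<bar> \<le> \<bar>quad_lagr al m be p0 pm p1 t\<bar>"
        by (metis abs_ge_zero abs_mult mult_left_le)
    qed
  qed
  have e3: "\<bar>2/3*d*c0 + 2/5*d^3*c2\<bar> \<le> J"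
  proof -
    have "((\<lambda>t. 0 + 0*(t-m) + c0/d^2*(t-m)^2 + c1/d^2*(t-m)^3 + c2/d^2*(t-m)^4) has_integral (2*0*d + 2*(c0/d^2)*d^3/3 + 2*(c2/d^2)*d^5/5)) {al..be}"
      by (rule ftc_poly_sym) (use assms bm in auto)
    moreover have "2*0*d + 2*(c0/d^2)*d^3/3 + 2*(c2/d^2)*d^5/5 = 2/3*d*c0 + 2/5*d^3*c2"
      using d by (simp add: field_simps power2_eq_square power3_eq_cube numeral_eq_Suc)
    ultimately have "((\<lambda>t. 0 + 0*(t-m) + c0/d^2*(t-m)^2 + c1/d^2*(t-m)^3 + c2/d^2*(t-m)^4) has_integral (2/3*d*c0 + 2/5*d^3*c2)) {al..be}"
      by metis
    then show ?thesis unfolding J_def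
    proof (rule int_abs_bound[OF _ hJ[unfolded J_def]])
      fix t assume t: "t \<in> {al..be}"
      have "0 + 0*(t-m) + c0/d^2*(t-m)^2 + c1/d^2*(t-m)^3 + c2/d^2*(t-m)^4 = quad_lagr al m be p0 pm p1 t * ((t-m)^2/d^2)"
        unfolding qf using d by (simp add: field_simps power2_eq_square power3_eq_cube numeral_eq_Suc)
      moreover have "\<bar>(t-m)^2/d^2\<bar> \<le> 1"
      proof -
        have "(t-m)^2 \<le> d^2" using w[OF t] by (metis abs_ge_zero power2_abs power_mono)
        then show ?thesis using d by simp
      qed
      ultimately show "\<bar>0 + 0*(t-m) + c0/d^2*(t-m)^2 + c1/d^2*(t-m)^3 + c2/d^2*(t-m)^4\<bar> \<le> \<bar>quad_lagr al m be p0 pm p1 t\<bar>"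
        by (metis abs_ge_zero abs_mult mult_left_le)
    qed
  qed
  have k: "2*d*(\<bar>c0 - c1*d + c2*d^2\<bar> + \<bar>c0\<bar> + \<bar>c0 + c1*d + c2*d^2\<bar>) \<le> 54*J"
    by (rule key_arith[OF d e1 e2 e3])
  have "c0 - c1*d + c2*d^2 = p0" "c0 + c1*d + c2*d^2 = p1"
    using d by (simp_all add: c0_def c1_def c2_def field_simps power2_eq_square)
  then have "2*d*(\<bar>p0\<bar>+\<bar>pm\<bar>+\<bar>p1\<bar>) \<le> 54*J" using k unfolding c0_def by simp
  moreover have "2*d = be-al" by (simp add: d_def)
  ultimately show ?thesis by (simp add: J_def m_def)
qed


lemma quad_cont: "continuous_on S (quad_lagr p m q fp fm (fq::'a::real_normed_vector))"
  unfolding quad_lagr_def divide_inverse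
  by (intro continuous_on_add continuous_on_scaleR continuous_on_mult continuous_on_const continuous_on_diff continuous_on_id)
lemma abs_div_le1: fixes x y :: real shows "\<bar>x\<bar> \<le> \<bar>y\<bar> \<Longrightarrow> \<bar>x / y\<bar> \<le> 1"
  by (cases "y = 0") (auto simp: abs_divide divide_le_eq_1)

lemma elem_pointwise:
  fixes w0 wm w1 :: "'a::real_normed_vector" and p0 pm p1 :: real
  assumes "al < be" "norm w0 = 1" "norm wm = 1" "norm w1 = 1" "t \<in> {al..be}"
  shows "norm (quad_lagr al ((al+be)/2) be (p0 *\<^sub>R w0) (pm *\<^sub>R wm) (p1 *\<^sub>R w1) t) \<le> \<bar>p0\<bar>+\<bar>pm\<bar>+\<bar>p1\<bar>"
proof -
  define m where "m = (al+be)/2"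
  define d where "d = (be-al)/2"
  define s where "s = t - m"
  have d: "d > 0" using assms by (simp add: d_def)
  have sd: "\<bar>s\<bar> \<le> d" using assms(5) by (auto simp: s_def m_def d_def abs_le_iff field_simps)
  have r: "t - m = s" "t - be = s - d" "t - al = s + d" "al - m = -d" "al - be = -2*d" "m - al = d" "m - be = -d"
     "be - al = 2*d" "be - m = d"
    by (simp_all add: s_def m_def d_def field_simps)
  define A where "A = ((t - m) * (t - be)) / ((al - m) * (al - be))"
  define B where "B = ((t - al) * (t - be)) / ((m - al) * (m - be))"
  define C where "C = ((t - al) * (t - m)) / ((be - al) * (be - m))"
  have A: "\<bar>A\<bar> \<le> 1" unfolding A_def r
    by (rule abs_div_le1) (use phi_bounds(1)[OF d sd] d in \<open>simp add: power2_eq_square\<close>)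
  have B: "\<bar>B\<bar> \<le> 1" unfolding B_def r
    by (rule abs_div_le1) (use phi_bounds(2)[OF d sd] d in \<open>simp add: power2_eq_square\<close>)
  have C: "\<bar>C\<bar> \<le> 1" unfolding C_def r
    by (rule abs_div_le1) (use phi_bounds(3)[OF d sd] d in \<open>simp add: power2_eq_square\<close>)
  have "quad_lagr al m be (p0 *\<^sub>R w0) (pm *\<^sub>R wm) (p1 *\<^sub>R w1) t
      = A *\<^sub>R (p0 *\<^sub>R w0) + B *\<^sub>R (pm *\<^sub>R wm) + C *\<^sub>R (p1 *\<^sub>R w1)"
    unfolding quad_lagr_def A_def B_def C_def ..
  also have "norm \<dots> \<le> \<bar>A\<bar>*\<bar>p0\<bar> + \<bar>B\<bar>*\<bar>pm\<bar> + \<bar>C\<bar>*\<bar>p1\<bar>"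
  proof -
    have "norm (A *\<^sub>R (p0 *\<^sub>R w0) + B *\<^sub>R (pm *\<^sub>R wm) + C *\<^sub>R (p1 *\<^sub>R w1))
       \<le> norm (A *\<^sub>R (p0 *\<^sub>R w0)) + norm (B *\<^sub>R (pm *\<^sub>R wm)) + norm (C *\<^sub>R (p1 *\<^sub>R w1))"
      using norm_triangle_ineq[of "A *\<^sub>R (p0 *\<^sub>R w0) + B *\<^sub>R (pm *\<^sub>R wm)" "C *\<^sub>R (p1 *\<^sub>R w1)"]
        norm_triangle_ineq[of "A *\<^sub>R (p0 *\<^sub>R w0)" "B *\<^sub>R (pm *\<^sub>R wm)"] by linarith
    then show ?thesis using assms(2-4) by (simp add: abs_mult)
  qed
  also have "\<dots> \<le> \<bar>p0\<bar>+\<bar>pm\<bar>+\<bar>p1\<bar>"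
    using mult_left_le_one_le[OF abs_ge_zero abs_ge_zero A, of p0] mult_left_le_one_le[OF abs_ge_zero abs_ge_zero B, of pm]
      mult_left_le_one_le[OF abs_ge_zero abs_ge_zero C, of p1] by linarith
  finally show ?thesis by (simp add: m_def)
qed

lemma elem_upper:
  fixes w0 wm w1 :: "'a::euclidean_space" and p0 pm p1 :: real
  assumes "al < be" "norm w0 = 1" "norm wm = 1" "norm w1 = 1"
  shows "integral {al..be} (\<lambda>t. norm (quad_lagr al ((al+be)/2) be (p0 *\<^sub>R w0) (pm *\<^sub>R wm) (p1 *\<^sub>R w1) t))
     \<le> (be-al)*(\<bar>p0\<bar>+\<bar>pm\<bar>+\<bar>p1\<bar>)"
proof -
  have "continuous_on {al..be} (\<lambda>t. norm (quad_lagr al ((al+be)/2) be (p0 *\<^sub>R w0) (pm *\<^sub>R wm) (p1 *\<^sub>R w1) t))"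
    by (intro continuous_on_norm quad_cont)
  then have i: "((\<lambda>t. norm (quad_lagr al ((al+be)/2) be (p0 *\<^sub>R w0) (pm *\<^sub>R wm) (p1 *\<^sub>R w1) t)) has_integral
     integral {al..be} (\<lambda>t. norm (quad_lagr al ((al+be)/2) be (p0 *\<^sub>R w0) (pm *\<^sub>R wm) (p1 *\<^sub>R w1) t))) {al..be}"
    by (intro integrable_integral integrable_continuous_interval)
  have c: "((\<lambda>t. \<bar>p0\<bar>+\<bar>pm\<bar>+\<bar>p1\<bar>) has_integral (be-al)*(\<bar>p0\<bar>+\<bar>pm\<bar>+\<bar>p1\<bar>)) {al..be}"
    using has_integral_const_real[of "\<bar>p0\<bar>+\<bar>pm\<bar>+\<bar>p1\<bar>" al be] assms(1) by simp
  show ?thesis by (rule has_integral_le[OF i c]) (rule elem_pointwise[OF assms])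
qed


lemma quad_left: "p < q \<Longrightarrow> quad_lagr p ((p+q)/2) q fp fm fq p = fp"
proof -
  assume "p < q"
  then have "p - (p+q)/2 \<noteq> 0" "p - q \<noteq> 0" by (simp_all add: field_simps)
  then have "(p - (p+q)/2) * (p - q) \<noteq> 0" by simp
  then show ?thesis unfolding quad_lagr_def by simp
qed

lemma quad_right: "p < q \<Longrightarrow> quad_lagr p ((p+q)/2) q fp fm fq q = fq"
proof -
  assume "p < q"
  then have "q - p \<noteq> 0" "q - (p+q)/2 \<noteq> 0" by (simp_all add: field_simps)
  then have "(q - p) * (q - (p+q)/2) \<noteq> 0" by simp
  then show ?thesis unfolding quad_lagr_def by simp
qed

lemma mesh_strict:
  assumes "is_mesh a b M x" "k < l" "l \<le> M"
  shows "x k < x l"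
  using assms(2,3)
proof (induction l)
  case 0 then show ?case by simp
next
  case (Suc l)
  have s: "x l < x (Suc l)" using assms(1) Suc.prems unfolding is_mesh_def by auto
  show ?case
  proof (cases "k = l")
    case True then show ?thesis using s by simp
  next
    case False then have "x k < x l" using Suc by simp
    then show ?thesis using s by simp
  qed
qed

lemma mesh_mono:
  assumes "is_mesh a b M x" "k \<le> l" "l \<le> M"
  shows "x k \<le> x l"
  using mesh_strict[OF assms(1), of k l] assms by (cases "k = l") auto

lemma interp2_piece:
  assumes mesh: "is_mesh a b M x" and i: "1 \<le> i" "i \<le> M" and t: "x (i-1) \<le> t" "t \<le> x i"
  shows "interp2 M x f t = quad_lagr (x (i-1)) (midpt x i) (x i) (f (x (i-1))) (f (midpt x i)) (f (x i)) t"
proof -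
  define P where "P = (\<lambda>i. 1 \<le> i \<and> i \<le> M \<and> x (i - 1) \<le> t \<and> t \<le> x i)"
  have Pi: "P i" using i t by (simp add: P_def)
  define j where "j = (LEAST i. P i)"
  have Pj: "P j" unfolding j_def by (rule LeastI[of P i, OF Pi])
  have ji: "j \<le> i" unfolding j_def using Pi by (rule Least_le)
  have lt: "x (k-1) < x k" if "1 \<le> k" "k \<le> M" for k
    using mesh_strict[OF mesh, of "k-1" k] that by simp
  have mid: "midpt x k = (x (k-1) + x k)/2" for k by (simp add: midpt_def)
  have "interp2 M x f t = quad_lagr (x (j-1)) (midpt x j) (x j) (f (x (j-1))) (f (midpt x j)) (f (x j)) t"
  proof -
    have "Ex P" using Pi by blast
    then show ?thesis unfolding interp2_def P_def[symmetric] j_def[symmetric] Let_def by (rule if_P)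
  qed
  also have "\<dots> = quad_lagr (x (i-1)) (midpt x i) (x i) (f (x (i-1))) (f (midpt x i)) (f (x i)) t"
  proof (cases "j = i")
    case True then show ?thesis by simp
  next
    case False
    then have jl: "j < i" using ji by simp
    have "x j \<le> x (i-1)" using mesh_mono[OF mesh, of j "i-1"] jl i by simp
    then have tj: "t = x j" "x j = x (i-1)" using Pj t unfolding P_def by auto
    have "j = i - 1"
    proof (rule ccontr)
      assume "j \<noteq> i - 1"
      then have "j < i - 1" using jl by simp
      then have "x j < x (i-1)" using mesh_strict[OF mesh, of j "i-1"] i by simp
      then show False using tj by simp
    qed
    have "quad_lagr (x (j-1)) (midpt x j) (x j) (f (x (j-1))) (f (midpt x j)) (f (x j)) t = f (x j)"
      unfolding tj(1) mid using quad_right lt Pj unfolding P_def by blast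
    moreover have "quad_lagr (x (i-1)) (midpt x i) (x i) (f (x (i-1))) (f (midpt x i)) (f (x i)) t = f (x (i-1))"
      unfolding tj mid using quad_left lt i by blast
    ultimately show ?thesis using tj by simp
  qed
  finally show ?thesis .
qed

lemma mesh_integral:
  fixes g :: "real \<Rightarrow> 'b::banach" and x :: "nat \<Rightarrow> real" and k :: nat
  assumes "\<And>i. 1 \<le> i \<Longrightarrow> i \<le> k \<Longrightarrow> (g has_integral I i) {x (i-1)..x i}"
    "\<And>i j. i \<le> j \<Longrightarrow> j \<le> k \<Longrightarrow> x i \<le> x j"
  shows "(g has_integral (\<Sum>i=1..k. I i)) {x 0..x k}"
  using assms
proof (induction k)
  case 0 then show ?case by (simp add: has_integral_refl(2))
next
  case (Suc k)
  have "(g has_integral (\<Sum>i=1..k. I i)) {x 0..x k}" using Suc by simp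
  moreover have "(g has_integral I (Suc k)) {x k..x (Suc k)}" using Suc.prems(1)[of "Suc k"] by simp
  ultimately have "(g has_integral ((\<Sum>i=1..k. I i) + I (Suc k))) {x 0..x (Suc k)}"
    by (rule has_integral_combine[rotated 2]) (use Suc.prems(2) in auto)
  then show ?case by simp
qed


lemma quad_cont_abs: "continuous_on S (\<lambda>t. \<bar>quad_lagr p m q (fp::real) fm fq t\<bar>)"
  using continuous_on_norm[OF quad_cont[of S p m q fp fm fq]] by simp

theorem lemmaA3:
  "\<exists>c>0. \<forall>(a::real) b M x (u::real \<Rightarrow> real) (v::real \<Rightarrow> real ^ 'd).
     is_mesh a b M x \<longrightarrow>
     continuous_on {a..b} u \<longrightarrow> continuous_on {a..b} v \<longrightarrow>
     (\<forall>z\<in>nodes2 M x. norm (v z) = 1) \<longrightarrow>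
     integral {a..b} (\<lambda>t. norm (interp2 M x (\<lambda>s. u s *\<^sub>R v s) t))
       \<le> c * integral {a..b} (\<lambda>t. \<bar>interp2 M x u t\<bar>)"
proof (intro exI[of _ 54] conjI allI impI)
  show "(0::real) < 54" by simp
  fix a b :: real and M :: nat and x :: "nat \<Rightarrow> real" and u :: "real \<Rightarrow> real" and v :: "real \<Rightarrow> real ^ 'd"
  assume mesh: "is_mesh a b M x" and "continuous_on {a..b} u" "continuous_on {a..b} v"
    and nv: "\<forall>z\<in>nodes2 M x. norm (v z) = 1"
  define L where "L i = integral {x (i-1)..x i} (\<lambda>t. norm (quad_lagr (x (i-1)) ((x (i-1) + x i)/2) (x i)
      (u (x (i-1)) *\<^sub>R v (x (i-1))) (u (midpt x i) *\<^sub>R v (midpt x i)) (u (x i) *\<^sub>R v (x i)) t))" for i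
  define R where "R i = integral {x (i-1)..x i} (\<lambda>t. \<bar>quad_lagr (x (i-1)) ((x (i-1) + x i)/2) (x i)
      (u (x (i-1))) (u (midpt x i)) (u (x i)) t\<bar>)" for i
  have lt: "x (i-1) < x i" if "1 \<le> i" "i \<le> M" for i
    using mesh_strict[OF mesh, of "i-1" i] that by simp
  have mono: "x i \<le> x j" if "i \<le> j" "j \<le> M" for i j
    using mesh_mono[OF mesh that] .
  have mid: "midpt x i = (x (i-1) + x i)/2" for i by (simp add: midpt_def)
  have hL: "((\<lambda>t. norm (interp2 M x (\<lambda>s. u s *\<^sub>R v s) t)) has_integral L i) {x (i-1)..x i}"
    if i: "1 \<le> i" "i \<le> M" for i
  proof -
    have "continuous_on {x (i-1)..x i} (\<lambda>t. norm (quad_lagr (x (i-1)) ((x (i-1) + x i)/2) (x i)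
      (u (x (i-1)) *\<^sub>R v (x (i-1))) (u (midpt x i) *\<^sub>R v (midpt x i)) (u (x i) *\<^sub>R v (x i)) t))"
      by (intro continuous_on_norm quad_cont)
    then have "((\<lambda>t. norm (quad_lagr (x (i-1)) ((x (i-1) + x i)/2) (x i)
      (u (x (i-1)) *\<^sub>R v (x (i-1))) (u (midpt x i) *\<^sub>R v (midpt x i)) (u (x i) *\<^sub>R v (x i)) t)) has_integral L i) {x (i-1)..x i}"
      unfolding L_def by (intro integrable_integral integrable_continuous_interval)
    then show ?thesis
      by (rule has_integral_spike_eq[OF negligible_empty, THEN iffD1, rotated])
         (use interp2_piece[OF mesh i, where f="\<lambda>s. u s *\<^sub>R v s"] in \<open>auto simp: mid\<close>)
  qed
  have hR: "((\<lambda>t. \<bar>interp2 M x u t\<bar>) has_integral R i) {x (i-1)..x i}"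
    if i: "1 \<le> i" "i \<le> M" for i
  proof -
    have "continuous_on {x (i-1)..x i} (\<lambda>t. \<bar>quad_lagr (x (i-1)) ((x (i-1) + x i)/2) (x i)
      (u (x (i-1))) (u (midpt x i)) (u (x i)) t\<bar>)"
      by (rule quad_cont_abs)
    then have "((\<lambda>t. \<bar>quad_lagr (x (i-1)) ((x (i-1) + x i)/2) (x i)
      (u (x (i-1))) (u (midpt x i)) (u (x i)) t\<bar>) has_integral R i) {x (i-1)..x i}"
      unfolding R_def by (intro integrable_integral integrable_continuous_interval)
    then show ?thesis
      by (rule has_integral_spike_eq[OF negligible_empty, THEN iffD1, rotated])
         (use interp2_piece[OF mesh i, where f=u] in \<open>auto simp: mid\<close>)
  qed
  have LR: "L i \<le> 54 * R i" if i: "1 \<le> i" "i \<le> M" for i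
  proof -
    have n: "x (i-1) \<in> nodes2 M x" "midpt x i \<in> nodes2 M x" "x i \<in> nodes2 M x"
      unfolding nodes2_def using i by auto
    have "L i \<le> (x i - x (i-1)) * (\<bar>u (x (i-1))\<bar> + \<bar>u (midpt x i)\<bar> + \<bar>u (x i)\<bar>)"
      unfolding L_def by (rule elem_upper[OF lt[OF i]]) (use nv n in auto)
    also have "\<dots> \<le> 54 * R i"
      unfolding R_def by (rule elem_lower[OF lt[OF i]])
    finally show ?thesis .
  qed
  have x0: "x 0 = a" "x M = b" using mesh unfolding is_mesh_def by auto
  have IL: "((\<lambda>t. norm (interp2 M x (\<lambda>s. u s *\<^sub>R v s) t)) has_integral (\<Sum>i=1..M. L i)) {a..b}"
    using mesh_integral[of M "\<lambda>t. norm (interp2 M x (\<lambda>s. u s *\<^sub>R v s) t)" L x] hL mono x0 by simp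
  have IR: "((\<lambda>t. \<bar>interp2 M x u t\<bar>) has_integral (\<Sum>i=1..M. R i)) {a..b}"
    using mesh_integral[of M "\<lambda>t. \<bar>interp2 M x u t\<bar>" R x] hR mono x0 by simp
  have "(\<Sum>i=1..M. L i) \<le> (\<Sum>i=1..M. 54 * R i)" by (rule sum_mono) (use LR in auto)
  also have "\<dots> = 54 * (\<Sum>i=1..M. R i)" by (simp add: sum_distrib_left)
  finally show "integral {a..b} (\<lambda>t. norm (interp2 M x (\<lambda>s. u s *\<^sub>R v s) t))
       \<le> 54 * integral {a..b} (\<lambda>t. \<bar>interp2 M x u t\<bar>)"
    using integral_unique[OF IL] integral_unique[OF IR] by simp
qed

end
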